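(* Let $k\ge1$ and let $A,B$ be FDSs. If $A^k=B^k$, then $[A]_0=[B]_0$.
   Context: A finite dynamical system (FDS) is a function $A:S_A\to S_A$ on a finite set, considered up to isomorphism of functional graphs. The product $AB$ acts on $S_A\times S_B$ by $(a,b)\mapsto(A(a),B(b))$ and $A^k$ is the $k$-fold product. A state $s$ is a cycle state if some $m$-fold iterate ($m>0$) of $A$ fixes $s$; $[A]_0$ is the restriction of $A$ to its cycle states (a permutation). *)

theory Defs
  imports "HOL-Library.FuncSet"
begin

definition is_fds :: "'a set \<Rightarrow> ('a \<Rightarrow> 'a) \<Rightarrow> bool" where
  "is_fds S f \<longleftrightarrow> finite S \<and> f ` S \<subseteq> S"

text \<open>Isomorphism of functional graphs (equality of FDSs up to isomorphism).\<close>
definition fds_iso :: "'a set \<Rightarrow> ('a \<Rightarrow> 'a) \<Rightarrow> 'b set \<Rightarrow> ('b \<Rightarrow> 'b) \<Rightarrow> bool" where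
  "fds_iso S f T g \<longleftrightarrow> (\<exists>h. bij_betw h S T \<and> (\<forall>x\<in>S. h (f x) = g (h x)))"

text \<open>k-fold product: states are k-tuples (functions on {..<k}), acting componentwise.\<close>
definition fds_pow_carrier :: "'a set \<Rightarrow> nat \<Rightarrow> (nat \<Rightarrow> 'a) set" where
  "fds_pow_carrier S k = PiE {..<k} (\<lambda>_. S)"

definition fds_pow :: "('a \<Rightarrow> 'a) \<Rightarrow> nat \<Rightarrow> (nat \<Rightarrow> 'a) \<Rightarrow> (nat \<Rightarrow> 'a)" where
  "fds_pow f k = (\<lambda>x. restrict (\<lambda>i. f (x i)) {..<k})"

definition cycle_states :: "'a set \<Rightarrow> ('a \<Rightarrow> 'a) \<Rightarrow> 'a set" where
  "cycle_states S f = {s \<in> S. \<exists>m>0. (f ^^ m) s = s}"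

end

theory Submission
  imports Defs
begin

lemma funpow_mod_period:
  assumes "(f^^m) x = x" shows "(f^^n) x = (f^^(n mod m)) x"
proof -
  have q: "(f^^(m*q)) x = x" for q
  proof (induction q)
    case 0 then show ?case by simp
  next
    case (Suc q)
    have "(f^^(m*Suc q)) x = (f^^m) ((f^^(m*q)) x)" by (simp add: funpow_add)
    then show ?case using Suc assms by simp
  qed
  have "n = n mod m + m*(n div m)" by simp
  then have "(f^^n) x = (f^^(n mod m)) ((f^^(m*(n div m))) x)"
    by (metis funpow_add o_apply)
  then show ?thesis using q by simp
qed

lemma period_aux:
  assumes "a < b" "b < m" "(f^^a) x = (f^^b) x" "(f^^m) x = x"
    "\<forall>d. 0<d \<and> d<m \<longrightarrow> (f^^d) x \<noteq> x"
  shows False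
proof -
  have "(f^^(m-b+a)) x = (f^^(m-b)) ((f^^a) x)" by (simp add: funpow_add)
  also have "\<dots> = (f^^(m-b)) ((f^^b) x)" using assms by simp
  also have "\<dots> = (f^^(m-b+b)) x" by (simp add: funpow_add)
  also have "\<dots> = x" using assms by simp
  finally show False using assms(1,2,5) by (metis add_pos_nonneg diff_less gr_zeroI less_nat_zero_code
        zero_less_diff add_less_cancel_left le_add_diff_inverse2 less_imp_le_nat not_less_iff_gr_or_eq le0 dual_order.strict_trans)
qed

lemma period_eq:
  assumes "0 < m" "(f^^m) x = x" "\<forall>d. 0<d \<and> d<m \<longrightarrow> (f^^d) x \<noteq> x"
  shows "(f^^i) x = (f^^j) x \<longleftrightarrow> i mod m = j mod m"
proof
  assume "i mod m = j mod m"
  then show "(f^^i) x = (f^^j) x" using funpow_mod_period[OF assms(2)] by metis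
next
  assume h: "(f^^i) x = (f^^j) x"
  have e: "(f^^(i mod m)) x = (f^^(j mod m)) x" using h funpow_mod_period[OF assms(2)] by metis
  have "i mod m < m" "j mod m < m" using assms(1) by auto
  then show "i mod m = j mod m"
    using period_aux[OF _ _ e assms(2,3)] period_aux[OF _ _ e[symmetric] assms(2,3)]
    by (meson linorder_neqE_nat)
qed

lemma funpow_in:
  assumes "P ` C \<subseteq> C" "x \<in> C" shows "(P^^i) x \<in> C"
  using assms by (induction i) auto

lemma orbit_card:
  assumes "0 < m" "(P^^m) x = x" "\<forall>d. 0<d \<and> d<m \<longrightarrow> (P^^d) x \<noteq> x"
  shows "card (range (\<lambda>i. (P^^i) x)) = m"
proof -
  have "range (\<lambda>i. (P^^i) x) = (\<lambda>i. (P^^i) x) ` {..<m}"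
  proof
    show "range (\<lambda>i. (P^^i) x) \<subseteq> (\<lambda>i. (P^^i) x) ` {..<m}"
    proof
      fix z assume "z \<in> range (\<lambda>i. (P^^i) x)"
      then obtain i where "z = (P^^i) x" by auto
      then have "z = (P^^(i mod m)) x" using funpow_mod_period[OF assms(2)] by simp
      moreover have "i mod m < m" using assms(1) by simp
      ultimately show "z \<in> (\<lambda>i. (P^^i) x) ` {..<m}" by auto
    qed
  qed auto
  moreover have "inj_on (\<lambda>i. (P^^i) x) {..<m}"
    unfolding inj_on_def using period_eq[OF assms] by auto
  ultimately show ?thesis by (simp add: card_image)
qed

lemma orbit_iso:
  assumes "0<m" "(P^^m) x = x" "\<forall>d. 0<d \<and> d<m \<longrightarrow> (P^^d) x \<noteq> x"
    "(Q^^m) y = y" "\<forall>d. 0<d \<and> d<m \<longrightarrow> (Q^^d) y \<noteq> y"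
  shows "\<exists>h. bij_betw h (range (\<lambda>i. (P^^i) x)) (range (\<lambda>i. (Q^^i) y))
           \<and> (\<forall>z\<in>range (\<lambda>i. (P^^i) x). h (P z) = Q (h z))"
proof -
  note pe = period_eq[OF assms(1-3)] and qe = period_eq[OF assms(1,4,5)]
  define h where "h z = (Q^^(LEAST i. (P^^i) x = z)) y" for z
  have hP: "h ((P^^i) x) = (Q^^i) y" for i
  proof -
    have "(P^^(LEAST l. (P^^l) x = (P^^i) x)) x = (P^^i) x" by (rule LeastI[of _ i]) simp
    then have "(LEAST l. (P^^l) x = (P^^i) x) mod m = i mod m" using pe by simp
    then show ?thesis unfolding h_def using qe by simp
  qed
  have "inj_on h (range (\<lambda>i. (P^^i) x))"
    unfolding inj_on_def using hP pe qe by auto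
  moreover have "h ` range (\<lambda>i. (P^^i) x) = range (\<lambda>i. (Q^^i) y)"
    using hP by (auto simp: image_iff)
  moreover have "\<forall>z\<in>range (\<lambda>i. (P^^i) x). h (P z) = Q (h z)"
  proof
    fix z assume "z \<in> range (\<lambda>i. (P^^i) x)"
    then obtain i where "z = (P^^i) x" by auto
    then have "P z = (P^^Suc i) x" by simp
    then have "h (P z) = (Q^^Suc i) y" using hP[of "Suc i"] by simp
    then show "h (P z) = Q (h z)" using hP[of i] \<open>z = _\<close> by simp
  qed
  ultimately show ?thesis unfolding bij_betw_def by blast
qed

lemma back_in_orbit:
  assumes "(P^^n) z = z" "0 < n" "P z = (P^^i) x"
  shows "z \<in> range (\<lambda>i. (P^^i) x)"
proof -
  have "z = (P^^(n-1)) (P z)" using assms(1,2)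
    by (metis Suc_diff_1 funpow_Suc_right o_apply)
  also have "\<dots> = (P^^(n-1+i)) x" using assms(3) by (simp add: funpow_add)
  finally show ?thesis by auto
qed

lemma perm_iso:
  assumes "finite C" "P ` C \<subseteq> C" "\<And>x. x\<in>C \<Longrightarrow> \<exists>n>0. (P^^n) x = x"
   "finite D" "Q ` D \<subseteq> D" "\<And>y. y\<in>D \<Longrightarrow> \<exists>n>0. (Q^^n) y = y"
   "\<And>j. j>0 \<Longrightarrow> card {x\<in>C. (P^^j) x = x} = card {y\<in>D. (Q^^j) y = y}"
  shows "\<exists>h. bij_betw h C D \<and> (\<forall>x\<in>C. h (P x) = Q (h x))"
  using assms
proof (induction "card C" arbitrary: C D rule: less_induct)
  case less
  show ?case
  proof (cases "C = {}")
    case True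
    have "D = {}"
    proof (rule ccontr)
      assume "D \<noteq> {}"
      then obtain y n where y: "y \<in> D" "n > 0" "(Q^^n) y = y" using less.prems(6) by blast
      then have "card {y\<in>D. (Q^^n) y = y} > 0" using less.prems(4) by (auto simp: card_gt_0_iff)
      then show False using less.prems(7)[OF y(2)] True by simp
    qed
    then show ?thesis using True by (auto simp: bij_betw_def)
  next
    case False
    have ex: "\<exists>m. 0<m \<and> (\<exists>x\<in>C. (P^^m) x = x)" using False less.prems(3) by blast
    define m where "m = (LEAST m. 0<m \<and> (\<exists>x\<in>C. (P^^m) x = x))"
    have m: "0<m \<and> (\<exists>x\<in>C. (P^^m) x = x)" unfolding m_def by (rule LeastI_ex[OF ex])
    have mmin: "\<And>d. 0<d \<Longrightarrow> d<m \<Longrightarrow> \<forall>x\<in>C. (P^^d) x \<noteq> x"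
      using not_less_Least m_def by blast
    obtain x where x: "x \<in> C" "(P^^m) x = x" using m by blast
    have "card {x\<in>C. (P^^m) x = x} > 0" using x less.prems(1) by (auto simp: card_gt_0_iff)
    then have "card {y\<in>D. (Q^^m) y = y} > 0" using less.prems(7) m by simp
    then obtain y where y: "y \<in> D" "(Q^^m) y = y" by (auto simp: card_gt_0_iff)
    have ymin: "\<forall>y\<in>D. (Q^^d) y \<noteq> y" if "0<d" "d<m" for d
    proof (rule ccontr)
      assume "\<not> (\<forall>y\<in>D. (Q^^d) y \<noteq> y)"
      then have "card {y\<in>D. (Q^^d) y = y} > 0" using less.prems(4) by (auto simp: card_gt_0_iff)
      then have "card {x\<in>C. (P^^d) x = x} > 0" using less.prems(7) that by simp
      then show False using mmin[OF that] by (auto simp: card_gt_0_iff)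
    qed
    have m0: "0 < m" using m by simp
    have xmin: "\<forall>d. 0<d \<and> d<m \<longrightarrow> (P^^d) x \<noteq> x" using mmin x by blast
    have ymin': "\<forall>d. 0<d \<and> d<m \<longrightarrow> (Q^^d) y \<noteq> y" using ymin y by blast
    note pe = period_eq[OF m0 x(2) xmin] and qe = period_eq[OF m0 y(2) ymin']
    define OA where "OA = range (\<lambda>i. (P^^i) x)"
    define OB where "OB = range (\<lambda>i. (Q^^i) y)"
    obtain h1 where h1: "bij_betw h1 OA OB" "\<forall>z\<in>OA. h1 (P z) = Q (h1 z)"
      using orbit_iso[OF m0 x(2) xmin y(2) ymin'] unfolding OA_def OB_def by blast
    have OAC: "OA \<subseteq> C" unfolding OA_def using funpow_in[OF less.prems(2) x(1)] by auto
    have OBD: "OB \<subseteq> D" unfolding OB_def using funpow_in[OF less.prems(5) y(1)] by auto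
    have cOA: "card OA = m" unfolding OA_def by (rule orbit_card[OF m0 x(2) xmin])
    have cOB: "card OB = m" unfolding OB_def by (rule orbit_card[OF m0 y(2) ymin'])
    have PA: "P z \<in> OA" if zA: "z \<in> OA" for z
    proof -
      obtain i where "z = (P^^i) x" using zA OA_def by auto
      then have "P z = (P^^Suc i) x" by simp
      then show ?thesis unfolding OA_def by blast
    qed
    have QB: "Q z \<in> OB" if zA: "z \<in> OB" for z
    proof -
      obtain i where "z = (Q^^i) y" using zA OB_def by auto
      then have "Q z = (Q^^Suc i) y" by simp
      then show ?thesis unfolding OB_def by blast
    qed
    define C' where "C' = C - OA"
    define D' where "D' = D - OB"
    have PC': "P ` C' \<subseteq> C'"
    proof
      fix w assume "w \<in> P ` C'"
      then obtain z where z: "z \<in> C'" "w = P z" by auto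
      have "w \<in> C" using z less.prems(2) C'_def by auto
      moreover have "w \<notin> OA"
      proof
        assume "w \<in> OA"
        then obtain i where "P z = (P^^i) x" using z OA_def by auto
        moreover obtain n where "n > 0" "(P^^n) z = z" using less.prems(3) z C'_def by blast
        ultimately have "z \<in> OA" using back_in_orbit OA_def by metis
        then show False using z C'_def by auto
      qed
      ultimately show "w \<in> C'" using C'_def by auto
    qed
    have QD': "Q ` D' \<subseteq> D'"
    proof
      fix w assume "w \<in> Q ` D'"
      then obtain z where z: "z \<in> D'" "w = Q z" by auto
      have "w \<in> D" using z less.prems(5) D'_def by auto
      moreover have "w \<notin> OB"
      proof
        assume "w \<in> OB"
        then obtain i where "Q z = (Q^^i) y" using z OB_def by auto
        moreover obtain n where "n > 0" "(Q^^n) z = z" using less.prems(6) z D'_def by blast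
        ultimately have "z \<in> OB" using back_in_orbit OB_def by metis
        then show False using z D'_def by auto
      qed
      ultimately show "w \<in> D'" using D'_def by auto
    qed
    have fixA: "(P^^j) z = z \<longleftrightarrow> j mod m = 0" if zA: "z \<in> OA" for z j
    proof -
      obtain i where zi: "z = (P^^i) x" using zA OA_def by auto
      have "(P^^j) z = (P^^(j+i)) x" using zi by (simp add: funpow_add)
      then have "(P^^j) z = z \<longleftrightarrow> (j+i) mod m = i mod m" using pe zi by simp
      also have "\<dots> \<longleftrightarrow> m dvd j" using mod_eq_dvd_iff_nat[of i "j+i" m] by simp
      finally show ?thesis by auto
    qed
    have fixB: "(Q^^j) z = z \<longleftrightarrow> j mod m = 0" if zA: "z \<in> OB" for z j
    proof -
      obtain i where zi: "z = (Q^^i) y" using zA OB_def by auto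
      have "(Q^^j) z = (Q^^(j+i)) y" using zi by (simp add: funpow_add)
      then have "(Q^^j) z = z \<longleftrightarrow> (j+i) mod m = i mod m" using qe zi by simp
      also have "\<dots> \<longleftrightarrow> m dvd j" using mod_eq_dvd_iff_nat[of i "j+i" m] by simp
      finally show ?thesis by auto
    qed
    have cnt: "card {z\<in>C'. (P^^j) z = z} = card {z\<in>D'. (Q^^j) z = z}" if "j > 0" for j
    proof -
      have eA: "{z\<in>C'. (P^^j) z = z} = {z\<in>C. (P^^j) z = z} - (if j mod m = 0 then OA else {})"
        using fixA C'_def by auto
      have eB: "{z\<in>D'. (Q^^j) z = z} = {z\<in>D. (Q^^j) z = z} - (if j mod m = 0 then OB else {})"
        using fixB D'_def by auto
      have sA: "(if j mod m = 0 then OA else {}) \<subseteq> {z\<in>C. (P^^j) z = z}" using fixA OAC by auto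
      have sB: "(if j mod m = 0 then OB else {}) \<subseteq> {z\<in>D. (Q^^j) z = z}" using fixB OBD by auto
      have fA: "finite (if j mod m = 0 then OA else {})" using OAC less.prems(1) finite_subset by auto
      have fB: "finite (if j mod m = 0 then OB else {})" using OBD less.prems(4) finite_subset by auto
      have cA: "card (if j mod m = 0 then OA else {}) = card (if j mod m = 0 then OB else {})"
        using cOA cOB by simp
      show ?thesis unfolding eA eB using card_Diff_subset[OF fA sA] card_Diff_subset[OF fB sB] cA
        less.prems(7)[OF that] by simp
    qed
    have "x \<in> OA" unfolding OA_def by (metis funpow_0 rangeI)
    then have "C' \<subset> C" unfolding C'_def using OAC x(1) by blast
    then have lt: "card C' < card C" using less.prems(1) by (rule psubset_card_mono[rotated])
    have fC': "finite C'" "finite D'" using less.prems(1,4) C'_def D'_def by auto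
    have cyc1: "\<And>x. x\<in>C' \<Longrightarrow> \<exists>n>0. (P^^n) x = x" using less.prems(3) C'_def by blast
    have cyc2: "\<And>x. x\<in>D' \<Longrightarrow> \<exists>n>0. (Q^^n) x = x" using less.prems(6) D'_def by blast
    have "\<exists>h. bij_betw h C' D' \<and> (\<forall>x\<in>C'. h (P x) = Q (h x))"
      by (rule less.hyps[OF lt fC'(1) PC' cyc1 fC'(2) QD' cyc2 cnt])
    then obtain g where g: "bij_betw g C' D'" "\<forall>x\<in>C'. g (P x) = Q (g x)" by blast
    define H where "H z = (if z \<in> OA then h1 z else g z)" for z
    have b1: "bij_betw H OA OB" using h1(1) by (rule bij_betw_cong[THEN iffD1, rotated]) (simp add: H_def)
    have b2: "bij_betw H C' D'" using g(1) by (rule bij_betw_cong[THEN iffD1, rotated]) (simp add: H_def C'_def)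
    have "bij_betw H (OA \<union> C') (OB \<union> D')"
      by (rule bij_betw_combine[OF b1 b2]) (auto simp: D'_def)
    moreover have e1: "OA \<union> C' = C" "OB \<union> D' = D" using OAC OBD C'_def D'_def by auto
    moreover have "\<forall>z\<in>C. H (P z) = Q (H z)"
    proof
      fix z assume z: "z \<in> C"
      show "H (P z) = Q (H z)"
      proof (cases "z \<in> OA")
        case True
        then show ?thesis using PA h1(2) H_def by simp
      next
        case False
        then have "z \<in> C'" using z C'_def by auto
        then have "P z \<in> C'" using PC' by auto
        then show ?thesis using g(2) \<open>z \<in> C'\<close> False H_def C'_def by simp
      qed
    qed
    ultimately show ?thesis by (intro exI[of _ H]) simp
  qed
qed

lemma pow_iter:
  assumes "x \<in> PiE {..<k} (\<lambda>_. S)"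
  shows "(fds_pow A k ^^ m) x = restrict (\<lambda>i. (A^^m) (x i)) {..<k}"
proof (induction m)
  case 0
  then show ?case using assms by (simp add: PiE_restrict)
next
  case (Suc m)
  then show ?case by (auto simp: fds_pow_def restrict_def fun_eq_iff)
qed

lemma pow_fix:
  "{x \<in> fds_pow_carrier S k. (fds_pow A k ^^ m) x = x}
   = PiE {..<k} (\<lambda>_. {a\<in>S. (A^^m) a = a})"
proof
  show "{x \<in> fds_pow_carrier S k. (fds_pow A k ^^ m) x = x}
   \<subseteq> PiE {..<k} (\<lambda>_. {a\<in>S. (A^^m) a = a})"
  proof
    fix x assume x: "x \<in> {x \<in> fds_pow_carrier S k. (fds_pow A k ^^ m) x = x}"
    then have xp: "x \<in> PiE {..<k} (\<lambda>_. S)" and e: "restrict (\<lambda>i. (A^^m) (x i)) {..<k} = x"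
      using pow_iter[where x=x and k=k and S=S and A=A and m=m] by (auto simp: fds_pow_carrier_def)
    have "(A^^m) (x i) = x i" if "i < k" for i
      using fun_cong[OF e, of i] that by simp
    then show "x \<in> PiE {..<k} (\<lambda>_. {a\<in>S. (A^^m) a = a})" using xp by (auto simp: PiE_iff)
  qed
next
  show "PiE {..<k} (\<lambda>_. {a\<in>S. (A^^m) a = a}) \<subseteq> {x \<in> fds_pow_carrier S k. (fds_pow A k ^^ m) x = x}"
  proof
    fix x assume x: "x \<in> PiE {..<k} (\<lambda>_. {a\<in>S. (A^^m) a = a})"
    then have xp: "x \<in> PiE {..<k} (\<lambda>_. S)" by (auto simp: PiE_iff)
    have "restrict (\<lambda>i. (A^^m) (x i)) {..<k} = x"
      using x by (auto simp: fun_eq_iff PiE_iff extensional_def)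
    then show "x \<in> {x \<in> fds_pow_carrier S k. (fds_pow A k ^^ m) x = x}"
      using pow_iter[OF xp, where A=A and m=m] xp by (simp add: fds_pow_carrier_def)
  qed
qed

lemma pow_fix_card:
  assumes "finite S"
  shows "card {x \<in> fds_pow_carrier S k. (fds_pow A k ^^ m) x = x} = card {a\<in>S. (A^^m) a = a} ^ k"
  unfolding pow_fix by (simp add: card_PiE)

lemma iso_fix_card:
  assumes "bij_betw h S T" "\<forall>x\<in>S. h (f x) = g (h x)" "f ` S \<subseteq> S"
  shows "card {x\<in>S. (f^^m) x = x} = card {y\<in>T. (g^^m) y = y}"
proof -
  have comm: "h ((f^^m) x) = (g^^m) (h x)" if "x \<in> S" for x
  proof (induction m)
    case 0 then show ?case by simp
  next
    case (Suc m)
    have "(f^^m) x \<in> S" using funpow_in[OF assms(3) that] .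
    then show ?case using Suc assms(2) by simp
  qed
  have inj: "inj_on h S" using assms(1) bij_betw_def by blast
  have "h ` {x\<in>S. (f^^m) x = x} = {y\<in>T. (g^^m) y = y}"
  proof
    show "h ` {x\<in>S. (f^^m) x = x} \<subseteq> {y\<in>T. (g^^m) y = y}"
      using comm assms(1) by (auto simp: bij_betw_def) (metis)
  next
    show "{y\<in>T. (g^^m) y = y} \<subseteq> h ` {x\<in>S. (f^^m) x = x}"
    proof
      fix y assume y: "y \<in> {y\<in>T. (g^^m) y = y}"
      then obtain x where x: "x \<in> S" "y = h x" using assms(1) by (auto simp: bij_betw_def)
      have "h ((f^^m) x) = h x" using comm[OF x(1)] x y by simp
      then have "(f^^m) x = x" using inj funpow_in[OF assms(3) x(1)] x(1) by (auto simp: inj_on_def)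
      then show "y \<in> h ` {x\<in>S. (f^^m) x = x}" using x by auto
    qed
  qed
  then show ?thesis using card_image[OF inj_on_subset[OF inj]] by (metis (no_types, lifting) mem_Collect_eq subsetI)
qed

lemma cyc_props:
  assumes "is_fds S A"
  shows "finite (cycle_states S A)" "A ` cycle_states S A \<subseteq> cycle_states S A"
    "\<And>x. x \<in> cycle_states S A \<Longrightarrow> \<exists>n>0. (A^^n) x = x"
    "\<And>m. m > 0 \<Longrightarrow> {x\<in>cycle_states S A. (A^^m) x = x} = {x\<in>S. (A^^m) x = x}"
proof -
  show "finite (cycle_states S A)" using assms by (auto simp: is_fds_def cycle_states_def)
  show "A ` cycle_states S A \<subseteq> cycle_states S A"
  proof
    fix w assume "w \<in> A ` cycle_states S A"
    then obtain s m where s: "w = A s" "s \<in> S" "m > 0" "(A^^m) s = s"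
      by (auto simp: cycle_states_def)
    have "(A^^m) (A s) = A s" using s by (metis funpow_swap1)
    then show "w \<in> cycle_states S A" using s assms by (auto simp: cycle_states_def is_fds_def)
  qed
  show "\<And>x. x \<in> cycle_states S A \<Longrightarrow> \<exists>n>0. (A^^n) x = x" by (auto simp: cycle_states_def)
  show "\<And>m. m > 0 \<Longrightarrow> {x\<in>cycle_states S A. (A^^m) x = x} = {x\<in>S. (A^^m) x = x}"
    by (auto simp: cycle_states_def)
qed

theorem mainTheorem17:
  fixes SA :: "'a set" and A :: "'a \<Rightarrow> 'a" and SB :: "'b set" and B :: "'b \<Rightarrow> 'b" and k :: nat
  assumes "is_fds SA A" and "is_fds SB B" and "k \<ge> 1"
    and "fds_iso (fds_pow_carrier SA k) (fds_pow A k) (fds_pow_carrier SB k) (fds_pow B k)"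
  shows "fds_iso (cycle_states SA A) A (cycle_states SB B) B"
proof -
  obtain h where h: "bij_betw h (fds_pow_carrier SA k) (fds_pow_carrier SB k)"
    "\<forall>x\<in>fds_pow_carrier SA k. h (fds_pow A k x) = fds_pow B k (h x)"
    using assms(4) by (auto simp: fds_iso_def)
  have cl: "fds_pow A k ` fds_pow_carrier SA k \<subseteq> fds_pow_carrier SA k"
    using assms(1) by (auto simp: fds_pow_def fds_pow_carrier_def is_fds_def PiE_iff)
  have cnt: "card {x\<in>cycle_states SA A. (A^^j) x = x} = card {y\<in>cycle_states SB B. (B^^j) y = y}"
    if "j > 0" for j
  proof -
    have "card {a\<in>SA. (A^^j) a = a} ^ k = card {b\<in>SB. (B^^j) b = b} ^ k"
      using iso_fix_card[OF h cl, of j] pow_fix_card[where S=SA and k=k and A=A and m=j] pow_fix_card[where S=SB and k=k and A=B and m=j]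
        assms(1,2) by (simp add: is_fds_def)
    then have "card {a\<in>SA. (A^^j) a = a} = card {b\<in>SB. (B^^j) b = b}"
      using assms(3) by (simp add: power_eq_imp_eq_base)
    then show ?thesis using cyc_props(4)[OF assms(1) that] cyc_props(4)[OF assms(2) that] by simp
  qed
  show ?thesis unfolding fds_iso_def
    by (rule perm_iso[OF cyc_props(1-3)[OF assms(1)] cyc_props(1-3)[OF assms(2)] cnt])
qed

end
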